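(* Let $k,l'$ be positive integers with $l'<k$. Then for every $n$, \[ f(n,k,n-l') \le f(n,l',n-l')+La\big(n,P_{k-l'+1,2^{l'}}\big). \]
   Context: $[n]=\{1,\dots,n\}$. A chain of length $m$ is a sequence of sets $F_1\subsetneq\dots\subsetneq F_m$; a family is $k$-Sperner if it contains no chain of length $k+1$. For a family $\mathcal{F}$ and a set $X$, $\mathcal{F}|_X=\{F\cap X: F\in\mathcal{F}\}$. A family $\mathcal{F}\subseteq 2^{[n]}$ is $l$-trace $k$-Sperner if for every $l$-element $L\subseteq[n]$, $\mathcal{F}|_L$ is $k$-Sperner; $f(n,k,l)$ denotes the maximum size of an $l$-trace $k$-Sperner family $\mathcal{F}\subseteq 2^{[n]}$. A family $\mathcal{F}$ of sets contains a poset $P$ if there is an injective map $i:P\to\mathcal{F}$ such that $p\le_P q$ implies $i(p)\subseteq i(q)$; otherwise $\mathcal{F}$ is $P$-free, and $La(n,P)$ is the maximum size of a $P$-free family $\mathcal{F}\subseteq 2^{[n]}$. For positive integers $h,c$, $T_{h,c}$ is the rooted tree of height $h$ (every root-to-leaf path has $h$ vertices) in which every non-leaf vertex has exactly $c$ children, and $P_{h,c}$ is the poset on the vertices of $T_{h,c}$ whose Hasse diagram is $T_{h,c}$ with all arcs directed towards the root (so each vertex is greater than its children, and the root is the maximum). *)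

theory Defs
  imports Main "HOL-Library.Sublist"
begin

definition has_chain :: "nat set set \<Rightarrow> nat \<Rightarrow> bool" where
  "has_chain G m \<longleftrightarrow> (\<exists>C :: nat \<Rightarrow> nat set.
      (\<forall>i<m. C i \<in> G) \<and> (\<forall>i. Suc i < m \<longrightarrow> C i \<subset> C (Suc i)))"

definition k_Sperner :: "nat \<Rightarrow> nat set set \<Rightarrow> bool" where
  "k_Sperner k G \<longleftrightarrow> \<not> has_chain G (Suc k)"

definition trace :: "nat set set \<Rightarrow> nat set \<Rightarrow> nat set set" where
  "trace F X = (\<lambda>A. A \<inter> X) ` F"

definition trace_Sperner :: "nat \<Rightarrow> nat \<Rightarrow> nat \<Rightarrow> nat set set \<Rightarrow> bool" where
  "trace_Sperner n l k F \<longleftrightarrow>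
     (\<forall>L. L \<subseteq> {1..n} \<and> card L = l \<longrightarrow> k_Sperner k (trace F L))"

definition f :: "nat \<Rightarrow> nat \<Rightarrow> nat \<Rightarrow> nat" where
  "f n k l = Max {card F | F. F \<subseteq> Pow {1..n} \<and> trace_Sperner n l k F}"

definition contains_poset :: "nat set set \<Rightarrow> 'a set \<Rightarrow> ('a \<Rightarrow> 'a \<Rightarrow> bool) \<Rightarrow> bool" where
  "contains_poset F V le \<longleftrightarrow> (\<exists>i. inj_on i V \<and> i ` V \<subseteq> F \<and>
      (\<forall>p\<in>V. \<forall>q\<in>V. le p q \<longrightarrow> i p \<subseteq> i q))"

definition La :: "nat \<Rightarrow> 'a set \<Rightarrow> ('a \<Rightarrow> 'a \<Rightarrow> bool) \<Rightarrow> nat" where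
  "La n V le = Max {card F | F. F \<subseteq> Pow {1..n} \<and> \<not> contains_poset F V le}"

text \<open>Vertices of T_{h,c}: words over {0..<c} of length < h (root = empty word,
  children of w are w @ [j]). Order of P_{h,c}: w \<le> v iff v is a prefix of w
  (each vertex is above its children; root is the maximum).\<close>
definition tree_vertices :: "nat \<Rightarrow> nat \<Rightarrow> nat list set" where
  "tree_vertices h c = {w. length w < h \<and> set w \<subseteq> {..<c}}"

definition tree_le :: "nat list \<Rightarrow> nat list \<Rightarrow> bool" where
  "tree_le w v \<longleftrightarrow> prefix v w"

end

theory Submission
  imports Defs
begin

lemma pigeon_child:
  fixes i :: "nat list \<Rightarrow> nat set" and V :: "nat list set"
  assumes inj: "inj_on i V"
    and ch: "\<And>j. j < (2::nat)^l \<Longrightarrow> w @ [j] \<in> V"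
    and wV: "w \<in> V"
    and sub: "\<And>j. j < (2::nat)^l \<Longrightarrow> i (w @ [j]) \<subseteq> i w"
    and fin: "finite (i w - L)" and cd: "card (i w - L) \<le> l"
  shows "\<exists>j < 2^l. i (w @ [j]) \<inter> L \<noteq> i w \<inter> L"
proof (rule ccontr)
  assume "\<not> ?thesis"
  hence eq: "\<And>j. j < 2^l \<Longrightarrow> i (w @ [j]) \<inter> L = i w \<inter> L" by auto
  define g where "g j = i (w @ [j]) - L" for j
  have dec: "i (w @ [j]) = (i w \<inter> L) \<union> g j" if "j < 2^l" for j
    using eq[OF that] unfolding g_def by blast
  have "inj_on g {..<2^l}"
  proof (rule inj_onI)
    fix a b assume a: "a \<in> {..<(2::nat)^l}" and b: "b \<in> {..<(2::nat)^l}" and "g a = g b"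
    hence "i (w @ [a]) = i (w @ [b])" using dec[of a] dec[of b] by auto
    hence "w @ [a] = w @ [b]" using inj ch a b by (auto dest: inj_onD)
    thus "a = b" by simp
  qed
  moreover have "g ` {..<2^l} \<subseteq> Pow (i w - L) - {i w - L}"
  proof
    fix x assume "x \<in> g ` {..<2^l}"
    then obtain j where j: "j < 2^l" and x: "x = g j" by auto
    have "x \<subseteq> i w - L" using sub[OF j] x unfolding g_def by auto
    moreover have "x \<noteq> i w - L"
    proof
      assume "x = i w - L"
      hence "i (w @ [j]) = i w" using dec[OF j] x by auto
      hence "w @ [j] = w" using inj ch[OF j] wV by (auto dest: inj_onD)
      thus False by simp
    qed
    ultimately show "x \<in> Pow (i w - L) - {i w - L}" by auto
  qed
  ultimately have "card {..<(2::nat)^l} \<le> card (Pow (i w - L) - {i w - L})"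
    using fin by (intro card_inj_on_le) auto
  also have "\<dots> = 2 ^ card (i w - L) - 1" using fin by (simp add: card_Pow)
  also have "\<dots> < 2 ^ l"
  proof -
    have "(2::nat) ^ card (i w - L) \<le> 2 ^ l" using cd by (simp add: power_increasing)
    moreover have "(0::nat) < 2 ^ card (i w - L)" by simp
    ultimately show ?thesis by linarith
  qed
  finally show False by simp
qed

lemma tree_chain:
  fixes i :: "nat list \<Rightarrow> nat set" and F :: "nat set set" and L :: "nat set"
  assumes inj: "inj_on i (tree_vertices h (2^l))"
    and img: "i ` tree_vertices h (2^l) \<subseteq> F"
    and mono: "\<forall>p\<in>tree_vertices h (2^l). \<forall>q\<in>tree_vertices h (2^l). tree_le p q \<longrightarrow> i p \<subseteq> i q"
    and small: "\<forall>A\<in>F. finite (A - L) \<and> card (A - L) \<le> l"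
  shows "w \<in> tree_vertices h (2^l) \<Longrightarrow> length w + d < h \<Longrightarrow>
     \<exists>C. (\<forall>t\<le>d. C t \<in> trace F L) \<and> (\<forall>t<d. C t \<subset> C (Suc t)) \<and> C d = i w \<inter> L"
proof (induction d arbitrary: w)
  case 0
  have "i w \<in> F" using img 0 by auto
  hence "i w \<inter> L \<in> trace F L" unfolding trace_def by auto
  thus ?case by (intro exI[of _ "\<lambda>_. i w \<inter> L"]) auto
next
  case (Suc d)
  let ?V = "tree_vertices h (2^l)"
  have ch: "w @ [j] \<in> ?V" if "j < 2^l" for j
    using Suc.prems that unfolding tree_vertices_def by auto
  have sub: "i (w @ [j]) \<subseteq> i w" if "j < 2^l" for j
    using mono ch[OF that] Suc.prems(1) unfolding tree_le_def by auto
  have "i w \<in> F" using img Suc.prems by auto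
  with small have fin: "finite (i w - L)" and cd: "card (i w - L) \<le> l" by auto
  obtain j where j: "j < 2^l" and ne: "i (w @ [j]) \<inter> L \<noteq> i w \<inter> L"
    using pigeon_child[OF inj ch Suc.prems(1) sub fin cd] by blast
  have strict: "i (w @ [j]) \<inter> L \<subset> i w \<inter> L" using ne sub[OF j] by auto
  obtain C where C1: "\<forall>t\<le>d. C t \<in> trace F L" and C2: "\<forall>t<d. C t \<subset> C (Suc t)"
    and C3: "C d = i (w @ [j]) \<inter> L"
    using Suc.IH[OF ch[OF j]] Suc.prems(2) by auto
  have wt: "i w \<inter> L \<in> trace F L" using \<open>i w \<in> F\<close> unfolding trace_def by auto
  show ?case
  proof (intro exI[of _ "C(Suc d := i w \<inter> L)"] conjI allI impI)
    fix t assume "t \<le> Suc d" thus "(C(Suc d := i w \<inter> L)) t \<in> trace F L"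
      using C1 wt by (cases "t = Suc d") auto
  next
    fix t assume "t < Suc d" thus "(C(Suc d := i w \<inter> L)) t \<subset> (C(Suc d := i w \<inter> L)) (Suc t)"
      using C2 C3 strict by (cases "t = d") auto
  qed simp
qed

lemma f_ge:
  assumes "F \<subseteq> Pow {1..n}" and "trace_Sperner n l k F"
  shows "card F \<le> f n k l"
  unfolding f_def
proof (rule Max_ge)
  have "{card F |F. F \<subseteq> Pow {1..n} \<and> trace_Sperner n l k F} \<subseteq> card ` Pow (Pow {1..n})" by auto
  thus "finite {card F |F. F \<subseteq> Pow {1..n} \<and> trace_Sperner n l k F}"
    by (rule finite_subset) auto
qed (use assms in auto)

lemma La_ge:
  assumes "F \<subseteq> Pow {1..n}" and "\<not> contains_poset F V le"
  shows "card F \<le> La n V le"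
  unfolding La_def
proof (rule Max_ge)
  have "{card F |F. F \<subseteq> Pow {1..n} \<and> \<not> contains_poset F V le} \<subseteq> card ` Pow (Pow {1..n})" by auto
  thus "finite {card F |F. F \<subseteq> Pow {1..n} \<and> \<not> contains_poset F V le}"
    by (rule finite_subset) auto
qed (use assms in auto)

lemma f_attained:
  "\<exists>F. F \<subseteq> Pow {1..n} \<and> trace_Sperner n l k F \<and> card F = f n k l"
proof -
  let ?S = "{card F |F. F \<subseteq> Pow {1..n} \<and> trace_Sperner n l k F}"
  have "?S \<subseteq> card ` Pow (Pow {1..n})" by auto
  hence fin: "finite ?S" by (rule finite_subset) auto
  have "trace {} L = {}" for L unfolding trace_def by simp
  hence "trace_Sperner n l k {}"
    unfolding trace_Sperner_def k_Sperner_def has_chain_def by (simp, blast)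
  hence "card {} \<in> ?S" unfolding mem_Collect_eq by (intro exI[of _ "{}"]) simp
  hence "?S \<noteq> {}" by blast
  from Max_in[OF fin this] have "Max ?S \<in> ?S" .
  then obtain F where "Max ?S = card F" "F \<subseteq> Pow {1..n}" "trace_Sperner n l k F"
    by blast
  thus ?thesis unfolding f_def by (intro exI[of _ F]) simp
qed

theorem theorem3p1:
  fixes k l' n :: nat
  assumes "0 < l'" and "l' < k"
  shows "f n k (n - l') \<le> f n l' (n - l')
           + La n (tree_vertices (k - l' + 1) (2 ^ l')) tree_le"
proof -
  let ?V = "tree_vertices (k - l' + 1) (2 ^ l')"
  obtain F where FP: "F \<subseteq> Pow {1..n}" and FT: "trace_Sperner n (n - l') k F"
    and Fc: "card F = f n k (n - l')" using f_attained[of n "n - l'" k] by blast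
  define P where "P R = (\<exists>i. inj_on i ?V \<and> i ` ?V \<subseteq> F \<and>
      (\<forall>p\<in>?V. \<forall>q\<in>?V. tree_le p q \<longrightarrow> i p \<subseteq> i q) \<and> i [] = R)" for R
  define F1 where "F1 = {R \<in> F. P R}"
  have s: "F1 \<subseteq> F" unfolding F1_def by blast
  define F2 where "F2 = F - F1"
  have finF: "finite F" using FP by (rule finite_subset) auto
  have root: "[] \<in> ?V" unfolding tree_vertices_def by auto
  have c1: "card F1 \<le> f n l' (n - l')"
  proof (rule f_ge)
    show "F1 \<subseteq> Pow {1..n}" using FP s by blast
    show "trace_Sperner n (n - l') l' F1"
      unfolding trace_Sperner_def k_Sperner_def
    proof (intro allI impI notI)
      fix L assume L: "L \<subseteq> {1..n} \<and> card L = n - l'" and "has_chain (trace F1 L) (Suc l')"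
      then obtain A where A1: "\<forall>t<Suc l'. A t \<in> trace F1 L"
        and A2: "\<forall>t. Suc t < Suc l' \<longrightarrow> A t \<subset> A (Suc t)" unfolding has_chain_def by auto
      have "A 0 \<in> trace F1 L" using A1 by simp
      then obtain R where R: "R \<in> F1" and RA: "A 0 = R \<inter> L" unfolding trace_def by blast
      from R have "P R" unfolding F1_def by blast
      then obtain i where inj: "inj_on i ?V" and img: "i ` ?V \<subseteq> F"
        and mono: "\<forall>p\<in>?V. \<forall>q\<in>?V. tree_le p q \<longrightarrow> i p \<subseteq> i q" and iR: "i [] = R"
        unfolding P_def by blast
      have cardD: "card ({1..n} - L) \<le> l'"
      proof -
        have "finite L" using L finite_subset[of L "{1..n}"] by auto
        hence "card ({1..n} - L) = card {1..n} - card L" using L card_Diff_subset[of L "{1..n}"] by blast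
        thus ?thesis using L by simp
      qed
      have small: "\<forall>A\<in>F. finite (A - L) \<and> card (A - L) \<le> l'"
      proof
        fix B assume "B \<in> F"
        hence "B - L \<subseteq> {1..n} - L" using FP by auto
        show "finite (B - L) \<and> card (B - L) \<le> l'"
        proof (rule conjI)
          have fD: "finite ({1..n} - L)" by simp
          show "finite (B - L)" using \<open>B - L \<subseteq> {1..n} - L\<close> fD by (rule finite_subset)
          have "card (B - L) \<le> card ({1..n} - L)" using fD \<open>B - L \<subseteq> {1..n} - L\<close> by (intro card_mono)
          thus "card (B - L) \<le> l'" using cardD by linarith
        qed
      qed
      obtain C where C1: "\<forall>t\<le>k - l'. C t \<in> trace F L"
        and C2: "\<forall>t<k - l'. C t \<subset> C (Suc t)" and C3: "C (k - l') = i [] \<inter> L"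
      proof -
        have "length ([]::nat list) + (k - l') < k - l' + 1" by simp
        from tree_chain[OF inj img mono small root this] show ?thesis using that by blast
      qed
      have sub: "trace F1 L \<subseteq> trace F L" unfolding trace_def using s by blast
      define D where "D t = (if t \<le> k - l' then C t else A (t - (k - l')))" for t
      have "has_chain (trace F L) (Suc k)"
        unfolding has_chain_def
      proof (intro exI[of _ D] conjI allI impI)
        fix t assume t: "t < Suc k"
        show "D t \<in> trace F L"
        proof (cases "t \<le> k - l'")
          case True thus ?thesis using C1 unfolding D_def by auto
        next
          case False
          hence "t - (k - l') < Suc l'" using t assms by auto
          thus ?thesis using False A1 sub unfolding D_def by auto
        qed
      next
        fix t assume t: "Suc t < Suc k"
        show "D t \<subset> D (Suc t)"
        proof (cases "t < k - l'")
          case True thus ?thesis using C2 unfolding D_def by auto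
        next
          case False
          show ?thesis
          proof (cases "t = k - l'")
            case True
            hence "D t = A 0" "D (Suc t) = A 1" using C3 iR RA unfolding D_def by auto
            thus ?thesis using A2 assms by auto
          next
            case False2: False
            hence tt: "Suc t - (k - l') = Suc (t - (k - l'))" "t > k - l'" using False by auto
            hence "D t = A (t - (k - l'))" "D (Suc t) = A (Suc (t - (k - l')))"
              unfolding D_def by auto
            moreover have "Suc (t - (k - l')) < Suc l'" using t tt assms by auto
            ultimately show ?thesis using A2 by auto
          qed
        qed
      qed
      moreover have "k_Sperner k (trace F L)" using FT L unfolding trace_Sperner_def by blast
      ultimately show False unfolding k_Sperner_def by blast
    qed
  qed
  have c2: "card F2 \<le> La n ?V tree_le"
  proof (rule La_ge)
    show "F2 \<subseteq> Pow {1..n}" using FP unfolding F2_def by auto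
    show "\<not> contains_poset F2 ?V tree_le"
    proof
      assume "contains_poset F2 ?V tree_le"
      then obtain i where inj: "inj_on i ?V" and img: "i ` ?V \<subseteq> F2"
        and mono: "\<forall>p\<in>?V. \<forall>q\<in>?V. tree_le p q \<longrightarrow> i p \<subseteq> i q"
        unfolding contains_poset_def by blast
      have "i [] \<in> F2" using img root by auto
      moreover have "i ` ?V \<subseteq> F" using img unfolding F2_def by auto
      have "P (i [])" unfolding P_def using inj mono \<open>i ` ?V \<subseteq> F\<close> by blast
      with \<open>i [] \<in> F2\<close> have "i [] \<in> F1" unfolding F1_def F2_def by blast
      thus False using \<open>i [] \<in> F2\<close> unfolding F2_def by auto
    qed
  qed
  have "card F = card F1 + card F2"
  proof -
    have "finite F1" using s finF by (rule finite_subset)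
    have "card F2 = card F - card F1" unfolding F2_def using \<open>finite F1\<close> s by (rule card_Diff_subset)
    moreover have "card F1 \<le> card F" using finF s by (rule card_mono)
    ultimately show ?thesis by linarith
  qed
  thus ?thesis using Fc c1 c2 by linarith
qed

end
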